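(* Let $\mathcal{P}^d=(\mathcal{D},\varphi,\mathcal{E})$ be a trembling-hand (TH) problem for $\mathrm{LTL}_f$ planning in a deterministic domain $\mathcal{D}=(S,s_0,A,F_d,L)$, and let $\mathcal{M}=(S,s_0,A,\mathcal{T},L)$ be the MDP constructed from it (see context). Then a strategy is optimal for $\mathcal{M}$ with objective $\varphi$ if and only if it is optimal for $\mathcal{P}^d$; that is, $$\sigma_p^*=\arg\max_{\sigma_m}\ \Pr_{\mathcal{M}}^{\sigma_m}(\varphi),\qquad\text{where }\ \sigma_p^*=\arg\max_{\sigma_p}\ \Pr_{\mathcal{D}}^{\sigma_p,\mathcal{E}}(\varphi).$$
   Context: $\mathrm{LTL}_f$ is linear temporal logic interpreted over finite nonempty traces over a finite set $Prop$ of atomic propositions; $\pi\models\varphi$ denotes that a finite trace $\pi\in(2^{Prop})^+$ satisfies $\varphi$. A deterministic domain is $\mathcal{D}=(S,s_0,A,F_d,L)$ with $S$ a finite set of states, $s_0\in S$ initial, $A$ a finite set of actions, $A(s)\subseteq A$ the (nonempty) set of actions applicable at $s$, $F_d:S\times A\to S$ giving the successor $F_d(s,a)$ for $a\in A(s)$, and $L:S\to 2^{Prop}$ a labelling. A finite path is an alternating sequence $s_0a_0s_1\cdots s_k$ of states and actions starting at $s_0$ with $a_i\in A(s_i)$; its induced trace is $L(s_0)\cdots L(s_k)$. An agent strategy is a function $\sigma$ from finite paths to actions with $\sigma(\rho)$ applicable at the last state of $\rho$. Action-instruction errors: $\mathcal{E}=\{err(s,a)\}$, where for each $s\in S$ and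 $a\in A(s)$, $err(s,a)$ is a probability distribution over $A(s)$; $err(s,a)(a')$ is the probability that the agent actually instructs $a'$ when it intends $a$ at $s$; $supp(s,a)$ is its support. Perturbed paths: given a strategy $\sigma_p$, a perturbed path is a sequence of triples $(s_0,a_0,a_0')(s_1,a_1,a_1')\cdots$ where $a_i=\sigma_p(s_0a_0s_1\cdots a_{i-1}s_i)$ is the intended action, $a_i'\in supp(s_i,a_i)$ is the actually instructed action, and $s_{i+1}=F_d(s_i,a_i')$. The probability measure on perturbed paths is the one in which, at each step, $a_i'$ is drawn according to $err(s_i,a_i)$ independently given the history. $\Pr_{\mathcal{D}}^{\sigma_p,\mathcal{E}}(\varphi)$ is the probability of the set of perturbed paths having some $k\ge 0$ with $L(s_0)\cdots L(s_k)\models\varphi$. The TH problem $\mathcal{P}^d$ asks for a strategy maximizing this probability (an optimal strategy for $\mathcal{P}^d$). MDP: $\mathcal{M}=(S,s_0,A,\mathcal{T},L)$ with $\mathcal{T}:S\times A\times S\to[0,1]$, $\mathcal{T}(s,a,\cdot)$ a distribution for $a\in A(s)$; a deterministic (history-dependent) strategy $\sigma_m$ maps finite paths $s_0a_0\cdots s_k$ to actions in $A(s_k)$ and induces the standard probability measure on infinite paths; $\Pr_{\mathcal{M}}^{\sigma_m}(\varphi)$ is the probability of the set of paths $s_0a_0s_1\cdots$ having some $k\ge0$ with $L(s_0)\cdots L(s_k)\models\varphi$. Constructed MDP: $S,s_0,A,L$ (and applicability) as in $\mathcal{D}$, and for $s\in S$, $a\in A(s)$, $s'\in S$: $\mathcal{T}(s,a,s')=\sum_{a'\in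 A(s):\,F_d(s,a')=s'} err(s,a)(a')$ (so $\mathcal{T}(s,a,s')=0$ if no applicable $a'$ leads to $s'$). *)

theory Defs
  imports "HOL-Probability.Probability_Mass_Function"
begin

datatype 'p ltlf =
    LTrue
  | Atom 'p
  | Neg "'p ltlf"
  | Conj "'p ltlf" "'p ltlf"
  | Next "'p ltlf"
  | Until "'p ltlf" "'p ltlf"

fun atoms :: "'p ltlf \<Rightarrow> 'p set" where
  "atoms LTrue = {}"
| "atoms (Atom p) = {p}"
| "atoms (Neg f) = atoms f"
| "atoms (Conj f g) = atoms f \<union> atoms g"
| "atoms (Next f) = atoms f"
| "atoms (Until f g) = atoms f \<union> atoms g"

fun sat_at :: "'p set list \<Rightarrow> nat \<Rightarrow> 'p ltlf \<Rightarrow> bool" where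
  "sat_at \<pi> i LTrue = True"
| "sat_at \<pi> i (Atom p) = (p \<in> \<pi> ! i)"
| "sat_at \<pi> i (Neg f) = (\<not> sat_at \<pi> i f)"
| "sat_at \<pi> i (Conj f g) = (sat_at \<pi> i f \<and> sat_at \<pi> i g)"
| "sat_at \<pi> i (Next f) = (i + 1 < length \<pi> \<and> sat_at \<pi> (i + 1) f)"
| "sat_at \<pi> i (Until f g) =
     (\<exists>j. i \<le> j \<and> j < length \<pi> \<and> sat_at \<pi> j g \<and> (\<forall>k. i \<le> k \<and> k < j \<longrightarrow> sat_at \<pi> k f))"

definition models :: "'p set list \<Rightarrow> 'p ltlf \<Rightarrow> bool" where
  "models \<pi> \<phi> \<longleftrightarrow> \<pi> \<noteq> [] \<and> sat_at \<pi> 0 \<phi>"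

text \<open>Domain (S, s0, A, F_d, L) with applicability Av, propositions Prop,
  errors err s a :: distribution over actions.\<close>
definition th_problem ::
  "'s set \<Rightarrow> 's \<Rightarrow> 'a set \<Rightarrow> ('s \<Rightarrow> 'a set) \<Rightarrow> ('s \<Rightarrow> 'a \<Rightarrow> 's) \<Rightarrow> ('s \<Rightarrow> 'p set)
   \<Rightarrow> 'p set \<Rightarrow> 'p ltlf \<Rightarrow> ('s \<Rightarrow> 'a \<Rightarrow> 'a pmf) \<Rightarrow> bool" where
  "th_problem S s0 Acts Av F L Prop \<phi> err \<longleftrightarrow>
     finite S \<and> s0 \<in> S \<and> finite Acts \<and> finite Prop \<and> atoms \<phi> \<subseteq> Prop \<and>
     (\<forall>s\<in>S. Av s \<subseteq> Acts \<and> Av s \<noteq> {} \<and> L s \<subseteq> Prop) \<and>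
     (\<forall>s\<in>S. \<forall>a\<in>Av s. F s a \<in> S \<and> set_pmf (err s a) \<subseteq> Av s)"

text \<open>A finite path s0 a0 s1 ... a_{k-1} s_k is represented as the list
  [(s0,a0),...,(s_{k-1},a_{k-1})] together with the last state s_k.\<close>
definition strategy :: "'s set \<Rightarrow> ('s \<Rightarrow> 'a set) \<Rightarrow> (('s \<times> 'a) list \<Rightarrow> 's \<Rightarrow> 'a) \<Rightarrow> bool" where
  "strategy S Av \<sigma> \<longleftrightarrow> (\<forall>h s. s \<in> S \<longrightarrow> \<sigma> h s \<in> Av s)"

text \<open>Distribution over perturbed path prefixes of length n:
  list of triples (s_i, a_i, a_i') for i < n, and the current state s_n.\<close>
fun pert_dist ::
  "'s \<Rightarrow> ('s \<Rightarrow> 'a \<Rightarrow> 's) \<Rightarrow> ('s \<Rightarrow> 'a \<Rightarrow> 'a pmf) \<Rightarrow> (('s \<times> 'a) list \<Rightarrow> 's \<Rightarrow> 'a)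
   \<Rightarrow> nat \<Rightarrow> (('s \<times> 'a \<times> 'a) list \<times> 's) pmf" where
  "pert_dist s0 F err \<sigma> 0 = return_pmf ([], s0)"
| "pert_dist s0 F err \<sigma> (Suc n) =
     bind_pmf (pert_dist s0 F err \<sigma> n) (\<lambda>(h, s).
       let a = \<sigma> (map (\<lambda>(si, ai, ai'). (si, ai)) h) s in
       map_pmf (\<lambda>a'. (h @ [(s, a, a')], F s a')) (err s a))"

definition reach_sat :: "('s \<Rightarrow> 'p set) \<Rightarrow> 'p ltlf \<Rightarrow> 's list \<Rightarrow> bool" where
  "reach_sat L \<phi> ss \<longleftrightarrow> (\<exists>k < length ss. models (map L (take (Suc k) ss)) \<phi>)"

text \<open>Pr_D^{sigma,E}(phi): probability of the (increasing) union over n of the events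
  "some k \<le> n with L(s_0)..L(s_k) |= phi", i.e. the supremum (= limit) over n.\<close>
definition th_prob ::
  "'s \<Rightarrow> ('s \<Rightarrow> 'a \<Rightarrow> 's) \<Rightarrow> ('s \<Rightarrow> 'p set) \<Rightarrow> ('s \<Rightarrow> 'a \<Rightarrow> 'a pmf) \<Rightarrow> 'p ltlf
   \<Rightarrow> (('s \<times> 'a) list \<Rightarrow> 's \<Rightarrow> 'a) \<Rightarrow> real" where
  "th_prob s0 F L err \<phi> \<sigma> =
     (SUP n. measure_pmf.prob (pert_dist s0 F err \<sigma> n)
        {(h, s). reach_sat L \<phi> (map fst h @ [s])})"

definition th_optimal where
  "th_optimal S s0 Av F L err \<phi> \<sigma> \<longleftrightarrow> strategy S Av \<sigma> \<and>
     (\<forall>\<sigma>'. strategy S Av \<sigma>' \<longrightarrow> th_prob s0 F L err \<phi> \<sigma>' \<le> th_prob s0 F L err \<phi> \<sigma>)"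

fun mdp_dist ::
  "'s \<Rightarrow> ('s \<Rightarrow> 'a \<Rightarrow> 's pmf) \<Rightarrow> (('s \<times> 'a) list \<Rightarrow> 's \<Rightarrow> 'a)
   \<Rightarrow> nat \<Rightarrow> (('s \<times> 'a) list \<times> 's) pmf" where
  "mdp_dist s0 K \<sigma> 0 = return_pmf ([], s0)"
| "mdp_dist s0 K \<sigma> (Suc n) =
     bind_pmf (mdp_dist s0 K \<sigma> n) (\<lambda>(h, s).
       let a = \<sigma> h s in map_pmf (\<lambda>s'. (h @ [(s, a)], s')) (K s a))"

definition mdp_prob ::
  "'s \<Rightarrow> ('s \<Rightarrow> 'a \<Rightarrow> 's pmf) \<Rightarrow> ('s \<Rightarrow> 'p set) \<Rightarrow> 'p ltlf
   \<Rightarrow> (('s \<times> 'a) list \<Rightarrow> 's \<Rightarrow> 'a) \<Rightarrow> real" where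
  "mdp_prob s0 K L \<phi> \<sigma> =
     (SUP n. measure_pmf.prob (mdp_dist s0 K \<sigma> n)
        {(h, s). reach_sat L \<phi> (map fst h @ [s])})"

definition mdp_optimal where
  "mdp_optimal S s0 Av K L \<phi> \<sigma> \<longleftrightarrow> strategy S Av \<sigma> \<and>
     (\<forall>\<sigma>'. strategy S Av \<sigma>' \<longrightarrow> mdp_prob s0 K L \<phi> \<sigma>' \<le> mdp_prob s0 K L \<phi> \<sigma>)"

definition constructed_mdp ::
  "'s set \<Rightarrow> ('s \<Rightarrow> 'a set) \<Rightarrow> ('s \<Rightarrow> 'a \<Rightarrow> 's) \<Rightarrow> ('s \<Rightarrow> 'a \<Rightarrow> 'a pmf) \<Rightarrow> ('s \<Rightarrow> 'a \<Rightarrow> 's pmf) \<Rightarrow> bool" where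
  "constructed_mdp S Av F err K \<longleftrightarrow>
     (\<forall>s\<in>S. \<forall>a\<in>Av s. \<forall>s'. pmf (K s a) s' = (\<Sum>a'\<in>{a'\<in>Av s. F s a' = s'}. pmf (err s a) a'))"

end

theory Submission
  imports Defs
begin

definition proj :: "('s \<times> 'a \<times> 'a) list \<Rightarrow> ('s \<times> 'a) list" where
  "proj h = map (\<lambda>(si, ai, ai'). (si, ai)) h"

lemma pert_S:
  assumes "th_problem S s0 Acts Av F L Prop \<phi> err" "strategy S Av \<sigma>"
  shows "(h, s) \<in> set_pmf (pert_dist s0 F err \<sigma> n) \<Longrightarrow> s \<in> S"
proof (induction n arbitrary: h s)
  case 0
  then show ?case using assms(1) by (auto simp: th_problem_def)
next
  case (Suc n)
  obtain x where x: "x \<in> set_pmf (pert_dist s0 F err \<sigma> n)"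
    and hx: "(h, s) \<in> set_pmf ((\<lambda>(h, s).
       let a = \<sigma> (map (\<lambda>(si, ai, ai'). (si, ai)) h) s in
       map_pmf (\<lambda>a'. (h @ [(s, a, a')], F s a')) (err s a)) x)"
    using Suc.prems unfolding pert_dist.simps set_bind_pmf by blast
  obtain h0 s1 where x_eq: "x = (h0, s1)" by (cases x)
  have s1: "s1 \<in> S" using Suc.IH x x_eq by blast
  define a where "a = \<sigma> (map (\<lambda>(si, ai, ai'). (si, ai)) h0) s1"
  have aA: "a \<in> Av s1" using assms(2) s1 unfolding a_def strategy_def by blast
  have "(h, s) \<in> (\<lambda>a'. (h0 @ [(s1, a, a')], F s1 a')) ` set_pmf (err s1 a)"
    using hx unfolding x_eq a_def by (simp add: Let_def)
  then obtain a' where a': "a' \<in> set_pmf (err s1 a)" and "s = F s1 a'" by blast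
  moreover have "a' \<in> Av s1" using a' aA s1 assms(1) unfolding th_problem_def by blast
  ultimately show ?case using s1 assms(1) unfolding th_problem_def by blast
qed

lemma K_eq:
  assumes "th_problem S s0 Acts Av F L Prop \<phi> err" "constructed_mdp S Av F err K"
    and "s \<in> S" "a \<in> Av s"
  shows "map_pmf (F s) (err s a) = K s a"
proof (rule pmf_eqI)
  fix s'
  have fin: "finite (Av s)" using assms(1,3) unfolding th_problem_def by (meson finite_subset)
  have sub: "set_pmf (err s a) \<subseteq> Av s" using assms(1,3,4) unfolding th_problem_def by blast
  have "pmf (map_pmf (F s) (err s a)) s' = measure_pmf.prob (err s a) (F s -` {s'})"
    by (simp add: pmf_map)
  also have "\<dots> = measure_pmf.prob (err s a) ((F s -` {s'}) \<inter> set_pmf (err s a))"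
    by (simp add: measure_Int_set_pmf)
  also have "(F s -` {s'}) \<inter> set_pmf (err s a) = {a'\<in>Av s. F s a' = s'} \<inter> set_pmf (err s a)"
    using sub by auto
  also have "measure_pmf.prob (err s a) \<dots> = measure_pmf.prob (err s a) {a'\<in>Av s. F s a' = s'}"
    by (simp add: measure_Int_set_pmf)
  also have "\<dots> = (\<Sum>a'\<in>{a'\<in>Av s. F s a' = s'}. pmf (err s a) a')"
    using fin by (simp add: measure_measure_pmf_finite)
  also have "\<dots> = pmf (K s a) s'" using assms(2,3,4) unfolding constructed_mdp_def by simp
  finally show "pmf (map_pmf (F s) (err s a)) s' = pmf (K s a) s'" .
qed

lemma dist_eq:
  assumes "th_problem S s0 Acts Av F L Prop \<phi> err" "constructed_mdp S Av F err K"
    "strategy S Av \<sigma>"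
  shows "map_pmf (\<lambda>(h, s). (proj h, s)) (pert_dist s0 F err \<sigma> n) = mdp_dist s0 K \<sigma> n"
proof (induction n)
  case 0
  then show ?case by (simp add: proj_def)
next
  case (Suc n)
  have "map_pmf (\<lambda>(h, s). (proj h, s)) (pert_dist s0 F err \<sigma> (Suc n))
     = bind_pmf (pert_dist s0 F err \<sigma> n) (\<lambda>(h, s).
          map_pmf (\<lambda>s'. (proj h @ [(s, \<sigma> (proj h) s)], s')) (K s (\<sigma> (proj h) s)))"
    unfolding pert_dist.simps map_bind_pmf
  proof (rule bind_pmf_cong[OF refl])
    fix x assume x: "x \<in> set_pmf (pert_dist s0 F err \<sigma> n)"
    obtain h s where [simp]: "x = (h, s)" by (cases x)
    have sS: "s \<in> S" using pert_S[OF assms(1,3)] x by simp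
    have aA: "\<sigma> (proj h) s \<in> Av s" using assms(3) sS by (auto simp: strategy_def)
    have "map_pmf (\<lambda>s'. (proj h @ [(s, \<sigma> (proj h) s)], s')) (K s (\<sigma> (proj h) s))
       = map_pmf (\<lambda>s'. (proj h @ [(s, \<sigma> (proj h) s)], s')) (map_pmf (F s) (err s (\<sigma> (proj h) s)))"
      using K_eq[OF assms(1,2) sS aA] by simp
    then show "map_pmf (\<lambda>(h, s). (proj h, s)) (case x of (h, s) \<Rightarrow>
          let a = \<sigma> (map (\<lambda>(si, ai, ai'). (si, ai)) h) s
          in map_pmf (\<lambda>a'. (h @ [(s, a, a')], F s a')) (err s a)) =
         (case x of (h, s) \<Rightarrow>
          map_pmf (\<lambda>s'. (proj h @ [(s, \<sigma> (proj h) s)], s')) (K s (\<sigma> (proj h) s)))"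
      by (simp add: pmf.map_comp o_def proj_def Let_def)
  qed
  also have "\<dots> = bind_pmf (map_pmf (\<lambda>(h, s). (proj h, s)) (pert_dist s0 F err \<sigma> n)) (\<lambda>(h, s).
          map_pmf (\<lambda>s'. (h @ [(s, \<sigma> h s)], s')) (K s (\<sigma> h s)))"
    unfolding bind_map_pmf
    by (rule bind_pmf_cong[OF refl]) (simp split: prod.split)
  also have "\<dots> = mdp_dist s0 K \<sigma> (Suc n)" using Suc.IH by (simp add: Let_def)
  finally show ?case .
qed

lemma prob_eq:
  assumes "th_problem S s0 Acts Av F L Prop \<phi> err" "constructed_mdp S Av F err K"
    "strategy S Av \<sigma>"
  shows "mdp_prob s0 K L \<phi> \<sigma> = th_prob s0 F L err \<phi> \<sigma>"
proof -
  have "measure_pmf.prob (mdp_dist s0 K \<sigma> n) {(h, s). reach_sat L \<phi> (map fst h @ [s])}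
      = measure_pmf.prob (pert_dist s0 F err \<sigma> n) {(h, s). reach_sat L \<phi> (map fst h @ [s])}" for n
  proof -
    have "measure_pmf.prob (mdp_dist s0 K \<sigma> n) {(h, s). reach_sat L \<phi> (map fst h @ [s])}
       = measure_pmf.prob (map_pmf (\<lambda>(h, s). (proj h, s)) (pert_dist s0 F err \<sigma> n))
           {(h, s). reach_sat L \<phi> (map fst h @ [s])}"
      using dist_eq[OF assms] by simp
    also have "\<dots> = measure_pmf.prob (pert_dist s0 F err \<sigma> n)
        ((\<lambda>(h, s). (proj h, s)) -` {(h, s). reach_sat L \<phi> (map fst h @ [s])})"
      by (simp add: measure_map_pmf)
    also have "((\<lambda>(h, s). (proj h, s)) -` {(h, s). reach_sat L \<phi> (map fst h @ [s])})
       = {(h, s). reach_sat L \<phi> (map fst h @ [s])}"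
      by (auto simp: proj_def o_def case_prod_beta)
    finally show ?thesis .
  qed
  then show ?thesis unfolding mdp_prob_def th_prob_def by simp
qed

theorem theorem1:
  fixes S :: "'s set" and s0 :: 's and Acts :: "'a set" and Av :: "'s \<Rightarrow> 'a set"
    and F :: "'s \<Rightarrow> 'a \<Rightarrow> 's" and L :: "'s \<Rightarrow> 'p set" and Prop :: "'p set"
    and \<phi> :: "'p ltlf" and err :: "'s \<Rightarrow> 'a \<Rightarrow> 'a pmf" and K :: "'s \<Rightarrow> 'a \<Rightarrow> 's pmf"
    and \<sigma> :: "('s \<times> 'a) list \<Rightarrow> 's \<Rightarrow> 'a"
  assumes "th_problem S s0 Acts Av F L Prop \<phi> err"
    and "constructed_mdp S Av F err K"
  shows "mdp_optimal S s0 Av K L \<phi> \<sigma> \<longleftrightarrow> th_optimal S s0 Av F L err \<phi> \<sigma>"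
proof -
  have e: "\<And>\<sigma>. strategy S Av \<sigma> \<Longrightarrow> mdp_prob s0 K L \<phi> \<sigma> = th_prob s0 F L err \<phi> \<sigma>"
    using prob_eq[OF assms] .
  show ?thesis
  proof (cases "strategy S Av \<sigma>")
    case True
    then have "\<forall>\<sigma>'. strategy S Av \<sigma>' \<longrightarrow>
       (mdp_prob s0 K L \<phi> \<sigma>' \<le> mdp_prob s0 K L \<phi> \<sigma> \<longleftrightarrow> th_prob s0 F L err \<phi> \<sigma>' \<le> th_prob s0 F L err \<phi> \<sigma>)"
      using e by simp
    then show ?thesis unfolding mdp_optimal_def th_optimal_def by blast
  next
    case False
    then show ?thesis unfolding mdp_optimal_def th_optimal_def by simp
  qed
qed

end
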